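(* Let $(Z,d)$ be a distance space, $X\cup Y=Z$ a cover, and $A:=X\cap Y$. Assume $A$ is nonempty and that for every $x\in X\setminus A$, $y\in Y\setminus A$ and $v\in A$ one has $d(x,y)\ge d(x,v)$ and $d(x,y)\ge d(y,v)$. Assume moreover that for every $x\in X\setminus A$ and $y\in Y\setminus A$ one has $d(x,y)\ge\mathrm{diam}(A)$. Then $\mathrm{VR}_r(X)\cup\mathrm{VR}_r(Y)\hookrightarrow\mathrm{VR}_r(Z)$ is a weak equivalence for all $r\in[0,\infty)$.
   Context: A distance on a set $Z$ is a function $d\colon Z\times Z\to[0,\infty]$ with $d(x,y)=d(y,x)$ and $d(x,x)=0$ (no triangle inequality assumed). $\mathrm{diam}(A)$ is the supremum of $d(a,b)$ over $a,b\in A$ (the maximum for finite $A$). For $B\subset Z$ and $r\in[0,\infty)$, $\mathrm{VR}_r(B)$ is the simplicial complex of all finite nonempty $\sigma\subset B$ with $d(x,y)\le r$ for all $x,y\in\sigma$. Homotopical notions refer to geometric realizations. *)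

theory Defs
  imports "HOL-Analysis.Analysis"
begin

definition distance_on :: "'a set \<Rightarrow> ('a \<Rightarrow> 'a \<Rightarrow> ennreal) \<Rightarrow> bool" where
  "distance_on Z d \<longleftrightarrow> (\<forall>x\<in>Z. \<forall>y\<in>Z. d x y = d y x) \<and> (\<forall>x\<in>Z. d x x = 0)"

definition ddiam :: "('a \<Rightarrow> 'a \<Rightarrow> ennreal) \<Rightarrow> 'a set \<Rightarrow> ennreal" where
  "ddiam d A = Sup {d a b | a b. a \<in> A \<and> b \<in> A}"

definition VR :: "('a \<Rightarrow> 'a \<Rightarrow> ennreal) \<Rightarrow> real \<Rightarrow> 'a set \<Rightarrow> 'a set set" where
  "VR d r B = {\<sigma>. finite \<sigma> \<and> \<sigma> \<noteq> {} \<and> \<sigma> \<subseteq> B \<and> (\<forall>x\<in>\<sigma>. \<forall>y\<in>\<sigma>. d x y \<le> ennreal r)}"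

text \<open>Each closed simplex carries the Euclidean topology (subspace of the
  product topology), and the realization carries the coherent (weak) topology.\<close>

definition simplex_pts :: "'a set \<Rightarrow> ('a \<Rightarrow> real) set" where
  "simplex_pts \<sigma> = {\<alpha>. (\<forall>v. 0 \<le> \<alpha> v) \<and> (\<forall>v. v \<notin> \<sigma> \<longrightarrow> \<alpha> v = 0) \<and> sum \<alpha> \<sigma> = 1}"

definition geom_real_set :: "'a set set \<Rightarrow> ('a \<Rightarrow> real) set" where
  "geom_real_set K = (\<Union>\<sigma>\<in>K. simplex_pts \<sigma>)"

definition geom_real_open :: "'a set set \<Rightarrow> ('a \<Rightarrow> real) set \<Rightarrow> bool" where
  "geom_real_open K U \<longleftrightarrow> U \<subseteq> geom_real_set K \<and>
     (\<forall>\<sigma>\<in>K. openin (subtopology (powertop_real UNIV) (simplex_pts \<sigma>)) (U \<inter> simplex_pts \<sigma>))"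

lemma istopology_geom_real_open: "istopology (geom_real_open K)"
  unfolding istopology_def
proof (intro conjI allI impI)
  fix S T assume S: "geom_real_open K S" and T: "geom_real_open K T"
  show "geom_real_open K (S \<inter> T)"
    unfolding geom_real_open_def
  proof (intro conjI ballI)
    show "S \<inter> T \<subseteq> geom_real_set K" using S unfolding geom_real_open_def by blast
    fix \<sigma> assume "\<sigma> \<in> K"
    then have "openin (subtopology (powertop_real UNIV) (simplex_pts \<sigma>)) ((S \<inter> simplex_pts \<sigma>) \<inter> (T \<inter> simplex_pts \<sigma>))"
      using S T unfolding geom_real_open_def by (simp add: openin_Int)
    moreover have "(S \<inter> simplex_pts \<sigma>) \<inter> (T \<inter> simplex_pts \<sigma>) = S \<inter> T \<inter> simplex_pts \<sigma>" by blast
    ultimately show "openin (subtopology (powertop_real UNIV) (simplex_pts \<sigma>)) (S \<inter> T \<inter> simplex_pts \<sigma>)" by simp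
  qed
next
  fix \<K> assume H: "\<forall>U\<in>\<K>. geom_real_open K U"
  show "geom_real_open K (\<Union>\<K>)"
    unfolding geom_real_open_def
  proof (intro conjI ballI)
    show "\<Union>\<K> \<subseteq> geom_real_set K" using H unfolding geom_real_open_def by blast
    fix \<sigma> assume "\<sigma> \<in> K"
    then have "openin (subtopology (powertop_real UNIV) (simplex_pts \<sigma>)) (\<Union>U\<in>\<K>. U \<inter> simplex_pts \<sigma>)"
      using H unfolding geom_real_open_def by (intro openin_clauses) auto
    moreover have "(\<Union>U\<in>\<K>. U \<inter> simplex_pts \<sigma>) = \<Union>\<K> \<inter> simplex_pts \<sigma>" by blast
    ultimately show "openin (subtopology (powertop_real UNIV) (simplex_pts \<sigma>)) (\<Union>\<K> \<inter> simplex_pts \<sigma>)" by simp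
  qed
qed

definition geom_real :: "'a set set \<Rightarrow> ('a \<Rightarrow> real) topology" where
  "geom_real K = topology (geom_real_open K)"

text \<open>Maps
  (cube, boundary) to (X, x) up to homotopy rel boundary are the elements of pi_n(X,x);
  for n = 0 the cube is a point with empty boundary, giving pi_0(X) (path components).\<close>

definition cube :: "nat \<Rightarrow> (nat \<Rightarrow> real) set" where
  "cube n = PiE {..<n} (\<lambda>_. {0..1})"

definition cube_bd :: "nat \<Rightarrow> (nat \<Rightarrow> real) set" where
  "cube_bd n = {t \<in> cube n. \<exists>i<n. t i = 0 \<or> t i = 1}"

definition cube_top :: "nat \<Rightarrow> (nat \<Rightarrow> real) topology" where
  "cube_top n = subtopology (powertop_real {..<n}) (cube n)"

definition sph_maps :: "'b topology \<Rightarrow> nat \<Rightarrow> 'b \<Rightarrow> ((nat \<Rightarrow> real) \<Rightarrow> 'b) set" where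
  "sph_maps X n x = {f. continuous_map (cube_top n) X f \<and> (\<forall>t\<in>cube_bd n. f t = x)}"

definition homotopic_rel_bd :: "'b topology \<Rightarrow> nat \<Rightarrow> 'b \<Rightarrow> ((nat \<Rightarrow> real) \<Rightarrow> 'b) \<Rightarrow> ((nat \<Rightarrow> real) \<Rightarrow> 'b) \<Rightarrow> bool" where
  "homotopic_rel_bd X n x f g \<longleftrightarrow> homotopic_with (\<lambda>h. \<forall>t\<in>cube_bd n. h t = x) (cube_top n) X f g"

definition weak_equivalence :: "'b topology \<Rightarrow> 'c topology \<Rightarrow> ('b \<Rightarrow> 'c) \<Rightarrow> bool" where
  "weak_equivalence X Y f \<longleftrightarrow>
     continuous_map X Y f \<and>
     (\<forall>y\<in>topspace Y. \<exists>x\<in>topspace X. path_component_of Y (f x) y) \<and>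
     (\<forall>n. \<forall>x\<in>topspace X.
        (\<forall>g\<in>sph_maps Y n (f x). \<exists>h\<in>sph_maps X n x. homotopic_rel_bd Y n (f x) (f \<circ> h) g) \<and>
        (\<forall>h1\<in>sph_maps X n x. \<forall>h2\<in>sph_maps X n x.
            homotopic_rel_bd Y n (f x) (f \<circ> h1) (f \<circ> h2) \<longrightarrow> homotopic_rel_bd X n x h1 h2))"

end

theory Submission
  imports Defs
begin

definition supp :: "('a \<Rightarrow> real) \<Rightarrow> 'a set" where
  "supp \<alpha> = {v. \<alpha> v \<noteq> 0}"

lemma openin_geom_real: "openin (geom_real K) U \<longleftrightarrow> geom_real_open K U"
  by (simp add: geom_real_def istopology_geom_real_open)

lemma simplex_sub: "\<sigma> \<in> K \<Longrightarrow> simplex_pts \<sigma> \<subseteq> geom_real_set K"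
  unfolding geom_real_set_def by blast

lemma topspace_geom_real: "topspace (geom_real K) = geom_real_set K"
proof -
  have "geom_real_open K (geom_real_set K)"
    unfolding geom_real_open_def
  proof (intro conjI ballI)
    fix \<sigma> assume "\<sigma> \<in> K"
    then have "geom_real_set K \<inter> simplex_pts \<sigma> = topspace (subtopology (powertop_real UNIV) (simplex_pts \<sigma>))"
      using simplex_sub[of \<sigma> K] by auto
    then show "openin (subtopology (powertop_real UNIV) (simplex_pts \<sigma>)) (geom_real_set K \<inter> simplex_pts \<sigma>)"
      by (simp add: openin_subtopology_refl)
  qed simp
  then show ?thesis
    unfolding topspace_def openin_geom_real geom_real_open_def by blast
qed

lemma closedin_simplex:
  assumes "finite \<sigma>"
  shows "closedin (powertop_real UNIV) (simplex_pts \<sigma>)"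
proof -
  have eq: "simplex_pts \<sigma> = (\<Inter>v\<in>UNIV. {\<alpha> \<in> topspace (powertop_real UNIV). \<alpha> v \<in> {0..}})
     \<inter> (\<Inter>v\<in>UNIV. {\<alpha> \<in> topspace (powertop_real UNIV). (if v \<in> \<sigma> then 0 else \<alpha> v) \<in> {0}})
     \<inter> {\<alpha> \<in> topspace (powertop_real UNIV). sum \<alpha> \<sigma> \<in> {1}}"
    unfolding simplex_pts_def by auto
  have c1: "continuous_map (powertop_real UNIV) euclideanreal (\<lambda>\<alpha>. \<alpha> v)" for v
    by (rule continuous_map_product_projection) simp
  have c2: "continuous_map (powertop_real UNIV) euclideanreal (\<lambda>\<alpha>. if v \<in> \<sigma> then 0 else \<alpha> v)" for v
    using c1 by (cases "v \<in> \<sigma>") auto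
  have c3: "continuous_map (powertop_real UNIV) euclideanreal (\<lambda>\<alpha>. sum \<alpha> \<sigma>)"
    using c1 assms by (intro continuous_map_sum) auto
  show ?thesis
    unfolding eq
    by (intro closedin_Int closedin_INT closedin_continuous_map_preimage[OF c1]
          closedin_continuous_map_preimage[OF c2] closedin_continuous_map_preimage[OF c3]) auto
qed

lemma cont_geom_to_prod:
  fixes K :: "'a set set"
  assumes "continuous_map T (geom_real K) f"
  shows "continuous_map T (powertop_real UNIV) f"
  unfolding continuous_map
proof (intro conjI allI impI)
  show "f ` topspace T \<subseteq> topspace (powertop_real UNIV)" by simp
  fix V :: "('a \<Rightarrow> real) set" assume V: "openin (powertop_real UNIV) V"
  have "openin (geom_real K) (V \<inter> geom_real_set K)"
    unfolding openin_geom_real geom_real_open_def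
  proof (intro conjI ballI)
    fix \<sigma> assume "\<sigma> \<in> K"
    then have "V \<inter> geom_real_set K \<inter> simplex_pts \<sigma> = V \<inter> simplex_pts \<sigma>"
      using simplex_sub[of \<sigma> K] by auto
    then show "openin (subtopology (powertop_real UNIV) (simplex_pts \<sigma>)) (V \<inter> geom_real_set K \<inter> simplex_pts \<sigma>)"
      using V by (auto simp: openin_subtopology)
  qed simp
  then have "openin T {x \<in> topspace T. f x \<in> V \<inter> geom_real_set K}"
    using assms unfolding continuous_map by blast
  moreover have "{x \<in> topspace T. f x \<in> V \<inter> geom_real_set K} = {x \<in> topspace T. f x \<in> V}"
    using assms unfolding continuous_map topspace_geom_real by blast
  ultimately show "openin T {x \<in> topspace T. f x \<in> V}" by simp
qed

lemma cont_prod_to_geom: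
  assumes cont: "continuous_map T (powertop_real UNIV) f"
    and F: "finite F" "F \<subseteq> K" "\<forall>\<sigma>\<in>K. finite \<sigma>"
    and img: "\<And>p. p \<in> topspace T \<Longrightarrow> f p \<in> (\<Union>\<sigma>\<in>F. simplex_pts \<sigma>)"
  shows "continuous_map T (geom_real K) f"
  unfolding continuous_map
proof (intro conjI allI impI)
  let ?S = "\<Union>\<sigma>\<in>F. simplex_pts \<sigma>"
  have SK: "?S \<subseteq> geom_real_set K" using F simplex_sub by blast
  show "f ` topspace T \<subseteq> topspace (geom_real K)"
    using img SK by (auto simp: topspace_geom_real)
  fix U assume "openin (geom_real K) U"
  then have U: "geom_real_open K U" by (simp add: openin_geom_real)
  have cl: "closedin (powertop_real UNIV) (simplex_pts \<sigma> - U)" if "\<sigma> \<in> F" for \<sigma>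
  proof -
    have sK: "\<sigma> \<in> K" using that F by blast
    then obtain V where V: "openin (powertop_real UNIV) V" "U \<inter> simplex_pts \<sigma> = V \<inter> simplex_pts \<sigma>"
      using U unfolding geom_real_open_def openin_subtopology by blast
    then have "simplex_pts \<sigma> - U = simplex_pts \<sigma> - V" by blast
    then show ?thesis using closedin_simplex[of \<sigma>] F sK V by auto
  qed
  have "closedin (powertop_real UNIV) (\<Union>\<sigma>\<in>F. simplex_pts \<sigma> - U)"
    using F cl by (intro closedin_Union) auto
  moreover have "(\<Union>\<sigma>\<in>F. simplex_pts \<sigma> - U) = ?S - U" by blast
  ultimately have "closedin (subtopology (powertop_real UNIV) ?S) (?S - U)"
    by (intro closedin_subset_topspace) auto
  then have "openin (subtopology (powertop_real UNIV) ?S) (?S - (?S - U))"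
    by (intro openin_diff) (auto simp: openin_subtopology_refl)
  moreover have cS: "continuous_map T (subtopology (powertop_real UNIV) ?S) f"
    using cont img by (auto simp: continuous_map_in_subtopology)
  ultimately have "openin T {x \<in> topspace T. f x \<in> ?S - (?S - U)}"
    unfolding continuous_map by blast
  moreover have "{x \<in> topspace T. f x \<in> ?S - (?S - U)} = {x \<in> topspace T. f x \<in> U}"
    using img by blast
  ultimately show "openin T {x \<in> topspace T. f x \<in> U}" by simp
qed


lemma pt_supp:
  assumes "\<alpha> \<in> simplex_pts \<sigma>" "finite \<sigma>"
  shows "supp \<alpha> \<subseteq> \<sigma>" "supp \<alpha> \<noteq> {}" "\<alpha> \<in> simplex_pts (supp \<alpha>)"
proof -
  show s: "supp \<alpha> \<subseteq> \<sigma>" using assms(1) unfolding simplex_pts_def supp_def by auto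
  have "sum \<alpha> (supp \<alpha>) = sum \<alpha> \<sigma>"
    using s assms(2) by (intro sum.mono_neutral_left) (auto simp: supp_def)
  then have "sum \<alpha> (supp \<alpha>) = 1" using assms(1) unfolding simplex_pts_def by auto
  then show "supp \<alpha> \<noteq> {}" by auto
  show "\<alpha> \<in> simplex_pts (supp \<alpha>)"
    using assms(1) \<open>sum \<alpha> (supp \<alpha>) = 1\<close> unfolding simplex_pts_def by (auto simp: supp_def)
qed

lemma t1_powertop: "t1_space (powertop_real I)"
  by (intro Hausdorff_imp_t1_space) (simp add: Hausdorff_space_product_topology)

lemma closed_inj:
  fixes K :: "'a set set"
  assumes "Q \<subseteq> geom_real_set K" "inj_on supp Q" "\<forall>\<sigma>\<in>K. finite \<sigma>"
  shows "closedin (geom_real K) Q"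
  unfolding closedin_def topspace_geom_real
proof (intro conjI)
  show "Q \<subseteq> geom_real_set K" by fact
  show "openin (geom_real K) (geom_real_set K - Q)"
    unfolding openin_geom_real geom_real_open_def
  proof (intro conjI ballI)
    fix \<sigma> assume sK: "\<sigma> \<in> K"
    have "supp ` (Q \<inter> simplex_pts \<sigma>) \<subseteq> Pow \<sigma>"
      using pt_supp(1) sK assms(3) by blast
    moreover have "inj_on supp (Q \<inter> simplex_pts \<sigma>)"
      using assms(2) by (rule inj_on_subset) blast
    moreover have "finite (Pow \<sigma>)" using sK assms(3) by simp
    ultimately have fin: "finite (Q \<inter> simplex_pts \<sigma>)"
      using finite_imageD finite_subset by metis
    then have "closedin (powertop_real UNIV) (Q \<inter> simplex_pts \<sigma>)"
    proof -
      have "\<forall>S::(('a \<Rightarrow> real) set). finite S \<longrightarrow> closedin (powertop_real UNIV) S"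
        using t1_powertop[where I="UNIV::'a set"] unfolding t1_space_closedin_finite by simp
      then show ?thesis using fin by auto
    qed
    then have "openin (powertop_real UNIV) (topspace (powertop_real UNIV) - (Q \<inter> simplex_pts \<sigma>))"
      by (simp only: closedin_def)
    then have "openin (powertop_real UNIV) (UNIV - (Q \<inter> simplex_pts \<sigma>))"
      by simp
    moreover have "(geom_real_set K - Q) \<inter> simplex_pts \<sigma> = (UNIV - (Q \<inter> simplex_pts \<sigma>)) \<inter> simplex_pts \<sigma>"
      using simplex_sub[OF sK] by blast
    ultimately show "openin (subtopology (powertop_real UNIV) (simplex_pts \<sigma>)) ((geom_real_set K - Q) \<inter> simplex_pts \<sigma>)"
      by (auto simp: openin_subtopology)
  qed simp
qed

lemma compact_finite_supp:
  assumes S: "compactin (geom_real K) S" and fin: "\<forall>\<sigma>\<in>K. finite \<sigma>"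
  shows "finite (supp ` S)"
proof (rule ccontr)
  assume inf: "infinite (supp ` S)"
  define c where "c \<tau> = (SOME \<alpha>. \<alpha> \<in> S \<and> supp \<alpha> = \<tau>)" for \<tau>
  have c: "c \<tau> \<in> S \<and> supp (c \<tau>) = \<tau>" if "\<tau> \<in> supp ` S" for \<tau>
    using that unfolding c_def by (metis (mono_tags, lifting) imageE someI)
  define Q where "Q = c ` (supp ` S)"
  have injc: "inj_on c (supp ` S)" using c by (metis inj_onI)
  have Qinf: "infinite Q" unfolding Q_def using inf injc finite_imageD by blast
  have QS: "Q \<subseteq> S" unfolding Q_def using c by blast
  have Stop: "S \<subseteq> geom_real_set K" using S compactin_subset_topspace topspace_geom_real by metis
  have injQ: "inj_on supp Q"
  proof (rule inj_onI)
    fix x y assume "x \<in> Q" "y \<in> Q" "supp x = supp y"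
    then obtain t1 t2 where "t1 \<in> supp ` S" "t2 \<in> supp ` S" "x = c t1" "y = c t2"
      unfolding Q_def by blast
    then show "x = y" using c \<open>supp x = supp y\<close> by metis
  qed
  have clQ: "closedin (geom_real K) Q'" if "Q' \<subseteq> Q" for Q'
    using that QS Stop injQ fin by (intro closed_inj) (auto intro: inj_on_subset)
  have cQ: "compactin (geom_real K) Q" using closed_compactin[OF S QS clQ] by simp
  let ?U = "(\<lambda>q. geom_real_set K - (Q - {q})) ` Q"
  have "\<forall>B\<in>?U. openin (geom_real K) B"
  proof
    fix B assume "B \<in> ?U"
    then obtain q where "q \<in> Q" "B = geom_real_set K - (Q - {q})" by blast
    then show "openin (geom_real K) B"
      using clQ[of "Q - {q}"] by (metis Diff_subset closedin_def topspace_geom_real)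
  qed
  moreover have "Q \<subseteq> \<Union>?U" using QS Stop by blast
  ultimately obtain F where F: "finite F" "F \<subseteq> ?U" "Q \<subseteq> \<Union>F"
    using cQ unfolding compactin_def by meson
  have "Q = (\<Union>B\<in>F. B \<inter> Q)" using F by blast
  moreover have "finite (B \<inter> Q)" if BF: "B \<in> F" for B
  proof -
    obtain q where "B = geom_real_set K - (Q - {q})" using BF F(2) by auto
    then have "B \<inter> Q \<subseteq> {q}" by blast
    then show ?thesis using finite_subset by blast
  qed
  ultimately have "finite Q" using F(1) by (metis finite_UN)
  then show False using Qinf by simp
qed


definition phi :: "real \<Rightarrow> real \<Rightarrow> real \<Rightarrow> real" where
  "phi a s m = a * (m / s)"

lemma phi_bounds:
  assumes "0 \<le> a" "a \<le> s" "0 \<le> m" "m \<le> s"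
  shows "0 \<le> phi a s m" "phi a s m \<le> a"
proof -
  have "0 \<le> m / s" using assms by simp
  moreover have "m / s \<le> 1" using assms by (cases "s = 0") (auto simp: divide_le_eq)
  ultimately show "0 \<le> phi a s m" "phi a s m \<le> a" unfolding phi_def
    using assms mult_left_le[of "m/s" a] by auto
qed

definition Dphi :: "(real \<times> real \<times> real) set" where
  "Dphi = {(a,s,m). 0 \<le> a \<and> a \<le> s \<and> 0 \<le> m \<and> m \<le> s}"

lemma phi_cont_on: "continuous_on Dphi (\<lambda>(a,s,m). phi a s m)"
  unfolding continuous_on_eq_continuous_within
proof
  fix x assume xD: "x \<in> Dphi"
  obtain a s m where x: "x = (a,s,m)" by (cases x) auto
  show "continuous (at x within Dphi) (\<lambda>(a,s,m). phi a s m)"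
  proof (cases "s = 0")
    case False
    have "continuous (at x) (\<lambda>y. fst y * (snd (snd y) / fst (snd y)))"
      using False x by (intro continuous_intros) auto
    then have "continuous (at x within Dphi) (\<lambda>y. fst y * (snd (snd y) / fst (snd y)))"
      by (rule continuous_at_imp_continuous_within)
    moreover have "(\<lambda>(a,s,m). phi a s m) = (\<lambda>y. fst y * (snd (snd y) / fst (snd y)))"
      by (auto simp: phi_def fun_eq_iff)
    ultimately show ?thesis by simp
  next
    case True
    then have a0: "a = 0" using xD x by (auto simp: Dphi_def)
    show ?thesis
      unfolding continuous_within_eps_delta
    proof (intro allI impI)
      fix e :: real assume "e > 0"
      show "\<exists>d>0. \<forall>x'\<in>Dphi. dist x' x < d \<longrightarrow> dist ((\<lambda>(a,s,m). phi a s m) x') ((\<lambda>(a,s,m). phi a s m) x) < e"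
      proof (intro exI conjI ballI impI)
        show "e > 0" by fact
        fix y assume yD: "y \<in> Dphi" and dy: "dist y x < e"
        obtain a' s' m' where y: "y = (a',s',m')" by (cases y) auto
        have b: "0 \<le> phi a' s' m'" "phi a' s' m' \<le> a'"
          using yD y phi_bounds[of a' s' m'] by (auto simp: Dphi_def)
        have "dist a' a \<le> dist y x" using dist_fst_le[of y x] unfolding x y by simp
        then have "a' < e" using dy a0 yD y by (auto simp: Dphi_def dist_real_def)
        moreover have "phi a s m = 0" using a0 by (simp add: phi_def)
        ultimately show "dist ((\<lambda>(a,s,m). phi a s m) y) ((\<lambda>(a,s,m). phi a s m) x) < e"
          using b x y by (simp add: dist_real_def)
      qed
    qed
  qed
qed

lemma phi_cont:
  assumes "continuous_map T euclideanreal a" "continuous_map T euclideanreal s"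
    "continuous_map T euclideanreal m"
    and "\<And>p. p \<in> topspace T \<Longrightarrow> 0 \<le> a p \<and> a p \<le> s p \<and> 0 \<le> m p \<and> m p \<le> s p"
  shows "continuous_map T euclideanreal (\<lambda>p. phi (a p) (s p) (m p))"
proof -
  have "continuous_map T (prod_topology euclideanreal (prod_topology euclideanreal euclideanreal)) (\<lambda>p. (a p, s p, m p))"
    using assms(1-3) by (intro continuous_map_pairedI)
  then have "continuous_map T euclidean (\<lambda>p. (a p, s p, m p))"
    by simp
  then have c1: "continuous_map T (top_of_set Dphi) (\<lambda>p. (a p, s p, m p))"
    using assms(4) by (auto simp: continuous_map_in_subtopology Dphi_def)
  have c2: "continuous_map (top_of_set Dphi) euclideanreal (\<lambda>(a,s,m). phi a s m)"
    using phi_cont_on by simp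
  show ?thesis using continuous_map_compose[OF c1 c2] by (simp add: o_def)
qed


definition ssum :: "'a set \<Rightarrow> 'a set \<Rightarrow> ('a \<Rightarrow> real) \<Rightarrow> real" where
  "ssum P W \<alpha> = sum \<alpha> (W \<inter> P)"

definition mm :: "'a set \<Rightarrow> 'a set \<Rightarrow> 'a set \<Rightarrow> ('a \<Rightarrow> real) \<Rightarrow> real" where
  "mm X Y W \<alpha> = min (ssum (X - Y) W \<alpha>) (ssum (Y - X) W \<alpha>)"

definition retr :: "'a set \<Rightarrow> 'a set \<Rightarrow> 'a \<Rightarrow> 'a set \<Rightarrow> ('a \<Rightarrow> real) \<Rightarrow> ('a \<Rightarrow> real)" where
  "retr X Y a0 W \<alpha> = (\<lambda>v. \<alpha> v
      - (if v \<in> X - Y then phi (\<alpha> v) (ssum (X - Y) W \<alpha>) (mm X Y W \<alpha>) else 0)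
      - (if v \<in> Y - X then phi (\<alpha> v) (ssum (Y - X) W \<alpha>) (mm X Y W \<alpha>) else 0)
      + (if v = a0 then 2 * mm X Y W \<alpha> else 0))"

definition HH :: "'a set \<Rightarrow> 'a set \<Rightarrow> 'a \<Rightarrow> 'a set \<Rightarrow> real \<Rightarrow> ('a \<Rightarrow> real) \<Rightarrow> ('a \<Rightarrow> real)" where
  "HH X Y a0 W t \<alpha> = (\<lambda>v. (1 - t) * \<alpha> v + t * retr X Y a0 W \<alpha> v)"

lemma simplex_nonneg: "\<alpha> \<in> simplex_pts \<sigma> \<Longrightarrow> 0 \<le> \<alpha> v"
  unfolding simplex_pts_def by auto

lemma simplex_out: "\<alpha> \<in> simplex_pts \<sigma> \<Longrightarrow> v \<notin> \<sigma> \<Longrightarrow> \<alpha> v = 0"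
  unfolding simplex_pts_def by auto

lemma simplex_supp: "\<alpha> \<in> simplex_pts \<sigma> \<Longrightarrow> \<alpha> v \<noteq> 0 \<Longrightarrow> v \<in> \<sigma>"
  unfolding simplex_pts_def by auto

lemma simplex_sum: "\<alpha> \<in> simplex_pts \<sigma> \<Longrightarrow> sum \<alpha> \<sigma> = 1"
  unfolding simplex_pts_def by auto

lemma simplex_mono:
  assumes "\<alpha> \<in> simplex_pts \<sigma>" "\<sigma> \<subseteq> S" "finite S"
  shows "\<alpha> \<in> simplex_pts S"
proof -
  have "sum \<alpha> S = sum \<alpha> \<sigma>"
    using assms by (intro sum.mono_neutral_right) (auto dest: simplex_supp)
  then show ?thesis using assms unfolding simplex_pts_def by auto
qed

lemma simplex_convex:
  fixes t :: real
  assumes "\<alpha> \<in> simplex_pts S" "\<beta> \<in> simplex_pts S" "0 \<le> t" "t \<le> 1"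
  shows "(\<lambda>v. (1 - t) * \<alpha> v + t * \<beta> v) \<in> simplex_pts S"
proof -
  have "sum (\<lambda>v. (1 - t) * \<alpha> v + t * \<beta> v) S = (1 - t) * sum \<alpha> S + t * sum \<beta> S"
    by (simp add: sum.distrib sum_distrib_left)
  also have "\<dots> = 1" using assms by (simp add: simplex_sum)
  finally show ?thesis
    using assms unfolding simplex_pts_def by auto
qed

lemma ssum_nonneg: "\<alpha> \<in> simplex_pts \<sigma> \<Longrightarrow> 0 \<le> ssum P W \<alpha>"
  unfolding ssum_def by (intro sum_nonneg) (rule simplex_nonneg)

lemma le_ssum:
  assumes "\<alpha> \<in> simplex_pts \<sigma>" "\<sigma> \<subseteq> W" "finite W" "v \<in> P"
  shows "\<alpha> v \<le> ssum P W \<alpha>"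
proof (cases "v \<in> W")
  case True
  then show ?thesis unfolding ssum_def using assms
    by (intro member_le_sum) (auto intro: simplex_nonneg)
next
  case False
  then have "v \<notin> \<sigma>" using assms(2) by blast
  then have "\<alpha> v = 0" using assms(1) by (rule simplex_out[rotated])
  then show ?thesis using ssum_nonneg[OF assms(1)] by simp
qed

lemma ssum_sigma:
  assumes "\<alpha> \<in> simplex_pts \<sigma>" "\<sigma> \<subseteq> S" "\<sigma> \<subseteq> W" "finite W" "finite S"
  shows "ssum P W \<alpha> = sum \<alpha> (S \<inter> P)"
proof -
  have "ssum P W \<alpha> = sum \<alpha> (\<sigma> \<inter> P)"
    unfolding ssum_def using assms
    by (intro sum.mono_neutral_right) (auto dest: simplex_supp)
  also have "\<dots> = sum \<alpha> (S \<inter> P)"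
    using assms by (intro sum.mono_neutral_left) (auto dest: simplex_supp)
  finally show ?thesis .
qed

lemma mm_bounds:
  assumes "\<alpha> \<in> simplex_pts \<sigma>"
  shows "0 \<le> mm X Y W \<alpha>" "mm X Y W \<alpha> \<le> ssum (X - Y) W \<alpha>" "mm X Y W \<alpha> \<le> ssum (Y - X) W \<alpha>"
  using ssum_nonneg[OF assms] unfolding mm_def by auto

lemma retr_id: "mm X Y W \<alpha> = 0 \<Longrightarrow> retr X Y a0 W \<alpha> = \<alpha>"
  unfolding retr_def phi_def by auto

lemma mm_zero:
  assumes "\<alpha> \<in> simplex_pts \<tau>" "\<tau> \<subseteq> X \<or> \<tau> \<subseteq> Y"
  shows "mm X Y W \<alpha> = 0"
proof -
  have "ssum (Y - X) W \<alpha> = 0 \<or> ssum (X - Y) W \<alpha> = 0"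
    using assms(2)
  proof
    assume "\<tau> \<subseteq> X"
    then have "ssum (Y - X) W \<alpha> = 0"
      unfolding ssum_def using assms(1) by (intro sum.neutral) (auto dest: simplex_supp)
    then show ?thesis ..
  next
    assume "\<tau> \<subseteq> Y"
    then have "ssum (X - Y) W \<alpha> = 0"
      unfolding ssum_def using assms(1) by (intro sum.neutral) (auto dest: simplex_supp)
    then show ?thesis ..
  qed
  then show ?thesis using mm_bounds[OF assms(1), of X Y W] by (auto simp: mm_def)
qed

lemma phi_sum:
  assumes "\<alpha> \<in> simplex_pts \<sigma>" "\<sigma> \<subseteq> S" "\<sigma> \<subseteq> W" "finite W" "finite S"
    and "0 \<le> m" "m \<le> ssum P W \<alpha>"
  shows "sum (\<lambda>v. if v \<in> P then phi (\<alpha> v) (ssum P W \<alpha>) m else 0) S = m"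
proof -
  have "sum (\<lambda>v. if v \<in> P then phi (\<alpha> v) (ssum P W \<alpha>) m else 0) S
      = sum (\<lambda>v. phi (\<alpha> v) (ssum P W \<alpha>) m) (S \<inter> P)"
    using assms(5) by (simp add: sum.inter_restrict)
  also have "\<dots> = sum \<alpha> (S \<inter> P) * (m / ssum P W \<alpha>)"
    unfolding phi_def by (rule sum_distrib_right[symmetric])
  also have "\<dots> = ssum P W \<alpha> * (m / ssum P W \<alpha>)"
    using ssum_sigma[OF assms(1-5)] by simp
  also have "\<dots> = m"
    using assms(6,7) by (cases "ssum P W \<alpha> = 0") auto
  finally show ?thesis .
qed

lemma retr_simplex:
  assumes "\<alpha> \<in> simplex_pts \<sigma>" "\<sigma> \<subseteq> W" "finite W" "finite \<sigma>" "a0 \<in> X" "a0 \<in> Y"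
  shows "retr X Y a0 W \<alpha> \<in> simplex_pts (insert a0 \<sigma>)"
proof -
  let ?S = "insert a0 \<sigma>"
  let ?m = "mm X Y W \<alpha>"
  have fS: "finite ?S" using assms by simp
  have mb: "0 \<le> ?m" "?m \<le> ssum (X - Y) W \<alpha>" "?m \<le> ssum (Y - X) W \<alpha>"
    using mm_bounds[OF assms(1)] by auto
  have nonneg: "0 \<le> retr X Y a0 W \<alpha> v" for v
  proof -
    have a: "0 \<le> \<alpha> v" by (rule simplex_nonneg[OF assms(1)])
    consider "v \<in> X - Y" | "v \<in> Y - X" | "v \<notin> X - Y" "v \<notin> Y - X" by blast
    then show ?thesis
    proof cases
      case 1
      have "phi (\<alpha> v) (ssum (X - Y) W \<alpha>) ?m \<le> \<alpha> v"
        using phi_bounds[of "\<alpha> v" "ssum (X - Y) W \<alpha>" ?m] a mb le_ssum[OF assms(1-3) 1] by auto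
      then show ?thesis using 1 assms(5,6) mb unfolding retr_def by auto
    next
      case 2
      have "phi (\<alpha> v) (ssum (Y - X) W \<alpha>) ?m \<le> \<alpha> v"
        using phi_bounds[of "\<alpha> v" "ssum (Y - X) W \<alpha>" ?m] a mb le_ssum[OF assms(1-3) 2] by auto
      then show ?thesis using 2 assms(5,6) mb unfolding retr_def by auto
    next
      case 3
      then show ?thesis using a mb unfolding retr_def by auto
    qed
  qed
  have out: "retr X Y a0 W \<alpha> v = 0" if "v \<notin> ?S" for v
    using that simplex_out[OF assms(1), of v] unfolding retr_def phi_def by auto
  have "sum (retr X Y a0 W \<alpha>) ?S = sum \<alpha> ?S
      - sum (\<lambda>v. if v \<in> X - Y then phi (\<alpha> v) (ssum (X - Y) W \<alpha>) ?m else 0) ?S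
      - sum (\<lambda>v. if v \<in> Y - X then phi (\<alpha> v) (ssum (Y - X) W \<alpha>) ?m else 0) ?S
      + sum (\<lambda>v. if v = a0 then 2 * ?m else 0) ?S"
    unfolding retr_def by (simp add: sum.distrib sum_subtractf)
  also have "\<dots> = 1 - ?m - ?m + 2 * ?m"
  proof -
    have "sum \<alpha> ?S = 1"
      using simplex_mono[OF assms(1) _ fS] simplex_sum by blast
    moreover have "sum (\<lambda>v. if v \<in> X - Y then phi (\<alpha> v) (ssum (X - Y) W \<alpha>) ?m else 0) ?S = ?m"
      using assms mb by (intro phi_sum) auto
    moreover have "sum (\<lambda>v. if v \<in> Y - X then phi (\<alpha> v) (ssum (Y - X) W \<alpha>) ?m else 0) ?S = ?m"
      using assms mb by (intro phi_sum) auto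
    moreover have "sum (\<lambda>v. if v = a0 then 2 * ?m else 0) ?S = 2 * ?m"
      using fS by (simp add: sum.delta)
    ultimately show ?thesis by simp
  qed
  also have "\<dots> = 1" by simp
  finally show ?thesis using nonneg out unfolding simplex_pts_def by auto
qed

lemma retr_side:
  assumes "\<alpha> \<in> simplex_pts \<sigma>" "\<sigma> \<subseteq> W" "finite W" "a0 \<in> X" "a0 \<in> Y"
  shows "(\<forall>v\<in>X - Y. retr X Y a0 W \<alpha> v = 0) \<or> (\<forall>v\<in>Y - X. retr X Y a0 W \<alpha> v = 0)"
proof -
  let ?m = "mm X Y W \<alpha>"
  have key: "\<alpha> v - phi (\<alpha> v) (ssum P W \<alpha>) (ssum P W \<alpha>) = 0" if "v \<in> P" for v P
  proof (cases "ssum P W \<alpha> = 0")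
    case True
    then have "\<alpha> v = 0" using le_ssum[OF assms(1-3) that] simplex_nonneg[OF assms(1), of v] by simp
    then show ?thesis by (simp add: phi_def)
  next
    case False
    then show ?thesis by (simp add: phi_def)
  qed
  show ?thesis
  proof (cases "ssum (X - Y) W \<alpha> \<le> ssum (Y - X) W \<alpha>")
    case True
    then have "?m = ssum (X - Y) W \<alpha>" by (simp add: mm_def)
    have "\<forall>v\<in>X - Y. retr X Y a0 W \<alpha> v = 0"
    proof
      fix v assume v: "v \<in> X - Y"
      then have "retr X Y a0 W \<alpha> v = \<alpha> v - phi (\<alpha> v) (ssum (X - Y) W \<alpha>) ?m"
        using assms(5) unfolding retr_def by auto
      then show "retr X Y a0 W \<alpha> v = 0" using key[OF v] \<open>?m = ssum (X - Y) W \<alpha>\<close> by simp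
    qed
    then show ?thesis ..
  next
    case False
    then have "?m = ssum (Y - X) W \<alpha>" by (simp add: mm_def)
    have "\<forall>v\<in>Y - X. retr X Y a0 W \<alpha> v = 0"
    proof
      fix v assume v: "v \<in> Y - X"
      then have "retr X Y a0 W \<alpha> v = \<alpha> v - phi (\<alpha> v) (ssum (Y - X) W \<alpha>) ?m"
        using assms(4) unfolding retr_def by auto
      then show "retr X Y a0 W \<alpha> v = 0" using key[OF v] \<open>?m = ssum (Y - X) W \<alpha>\<close> by simp
    qed
    then show ?thesis ..
  qed
qed

lemma HH_0: "HH X Y a0 W 0 \<alpha> = \<alpha>" unfolding HH_def by simp
lemma HH_1: "HH X Y a0 W 1 \<alpha> = retr X Y a0 W \<alpha>" unfolding HH_def by simp


lemma VR_finite: "\<sigma> \<in> VR d r B \<Longrightarrow> finite \<sigma>"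
  unfolding VR_def by auto

lemma VR_down: "\<sigma> \<in> VR d r B \<Longrightarrow> \<tau> \<subseteq> \<sigma> \<Longrightarrow> \<tau> \<noteq> {} \<Longrightarrow> \<tau> \<in> VR d r B"
  unfolding VR_def by (auto intro: finite_subset)

lemma VR_mono: "B \<subseteq> B' \<Longrightarrow> VR d r B \<subseteq> VR d r B'"
  unfolding VR_def by auto

lemma VRU_finite: "\<sigma> \<in> VR d r X \<union> VR d r Y \<Longrightarrow> finite \<sigma>"
  using VR_finite by blast

lemma VRU_down: "\<sigma> \<in> VR d r X \<union> VR d r Y \<Longrightarrow> \<tau> \<subseteq> \<sigma> \<Longrightarrow> \<tau> \<noteq> {} \<Longrightarrow> \<tau> \<in> VR d r X \<union> VR d r Y"
  using VR_down by blast

lemma geom_real_set_mono: "K \<subseteq> K' \<Longrightarrow> geom_real_set K \<subseteq> geom_real_set K'"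
  unfolding geom_real_set_def by blast

lemma bad_insert:
  assumes dist: "distance_on Z d" and XYZ: "X \<union> Y = Z"
    and h4: "\<forall>x\<in>X - (X \<inter> Y). \<forall>y\<in>Y - (X \<inter> Y). \<forall>v\<in>X \<inter> Y. d x y \<ge> d x v \<and> d x y \<ge> d y v"
    and h5: "\<forall>x\<in>X - (X \<inter> Y). \<forall>y\<in>Y - (X \<inter> Y). d x y \<ge> ddiam d (X \<inter> Y)"
    and a0: "a0 \<in> X" "a0 \<in> Y"
    and \<sigma>: "\<sigma> \<in> VR d r Z" and x: "x \<in> \<sigma>" "x \<in> X - Y" and y: "y \<in> \<sigma>" "y \<in> Y - X"
  shows "insert a0 \<sigma> \<in> VR d r Z"
proof -
  have sZ: "\<sigma> \<subseteq> Z" and fin: "finite \<sigma>" and pw: "\<forall>u\<in>\<sigma>. \<forall>w\<in>\<sigma>. d u w \<le> ennreal r"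
    using \<sigma> unfolding VR_def by auto
  have XmY: "X - (X \<inter> Y) = X - Y" "Y - (X \<inter> Y) = Y - X" by auto
  have a0Z: "a0 \<in> Z" using a0 XYZ by blast
  have ua: "d u a0 \<le> ennreal r" if u: "u \<in> \<sigma>" for u
  proof -
    consider "u \<in> X - Y" | "u \<in> Y - X" | "u \<in> X \<inter> Y" using u sZ XYZ by blast
    then show ?thesis
    proof cases
      case 1
      then have "d u a0 \<le> d u y" using h4 y(2) a0 unfolding XmY by blast
      also have "\<dots> \<le> ennreal r" using pw u y(1) by blast
      finally show ?thesis .
    next
      case 2
      then have "d u a0 \<le> d x u" using h4 x(2) a0 unfolding XmY by blast
      also have "\<dots> \<le> ennreal r" using pw u x(1) by blast
      finally show ?thesis .
    next
      case 3
      have "d u a0 \<le> ddiam d (X \<inter> Y)"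
        unfolding ddiam_def using 3 a0 by (intro Sup_upper) blast
      also have "\<dots> \<le> d x y" using h5 x(2) y(2) unfolding XmY by blast
      also have "\<dots> \<le> ennreal r" using pw x(1) y(1) by blast
      finally show ?thesis .
    qed
  qed
  have au: "d a0 u \<le> ennreal r" if u: "u \<in> \<sigma>" for u
  proof -
    have "d a0 u = d u a0" using dist a0Z u sZ unfolding distance_on_def by blast
    then show ?thesis using ua[OF u] by simp
  qed
  have aa: "d a0 a0 \<le> ennreal r" using dist a0Z unfolding distance_on_def by simp
  show ?thesis
    unfolding VR_def using fin sZ a0Z pw ua au aa by auto
qed

lemma to_VR:
  assumes "\<beta> \<in> simplex_pts S" "S \<in> VR d r Z" "Z = X \<union> Y" "\<forall>v\<in>X - Y. \<beta> v = 0"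
  shows "\<beta> \<in> geom_real_set (VR d r Y)"
proof -
  have fS: "finite S" using assms(2) VR_finite by blast
  note ps = pt_supp[OF assms(1) fS]
  have "supp \<beta> \<subseteq> Y"
  proof
    fix v assume v: "v \<in> supp \<beta>"
    then have "v \<in> Z" using ps(1) assms(2) unfolding VR_def by blast
    moreover have "v \<notin> X - Y" using v assms(4) unfolding supp_def by auto
    ultimately show "v \<in> Y" using assms(3) by blast
  qed
  moreover have "\<forall>u\<in>supp \<beta>. \<forall>w\<in>supp \<beta>. d u w \<le> ennreal r"
    using ps(1) assms(2) unfolding VR_def by blast
  moreover have "finite (supp \<beta>)" using ps(1) fS finite_subset by blast
  ultimately have "supp \<beta> \<in> VR d r Y"
    using ps(2) unfolding VR_def by blast
  then show ?thesis using ps(3) unfolding geom_real_set_def by blast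
qed

lemma retr_fix:
  assumes "\<alpha> \<in> geom_real_set (VR d r X \<union> VR d r Y)"
  shows "retr X Y a0 W \<alpha> = \<alpha>" "HH X Y a0 W t \<alpha> = \<alpha>"
proof -
  obtain \<tau> where "\<tau> \<in> VR d r X \<union> VR d r Y" "\<alpha> \<in> simplex_pts \<tau>"
    using assms unfolding geom_real_set_def by blast
  then have "\<tau> \<subseteq> X \<or> \<tau> \<subseteq> Y" unfolding VR_def by auto
  then have "mm X Y W \<alpha> = 0" using mm_zero \<open>\<alpha> \<in> simplex_pts \<tau>\<close> by blast
  then show r: "retr X Y a0 W \<alpha> = \<alpha>" by (rule retr_id)
  show "HH X Y a0 W t \<alpha> = \<alpha>" unfolding HH_def r by (simp add: algebra_simps)
qed

lemma pointwise:
  assumes dist: "distance_on Z d" and XYZ: "X \<union> Y = Z"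
    and h4: "\<forall>x\<in>X - (X \<inter> Y). \<forall>y\<in>Y - (X \<inter> Y). \<forall>v\<in>X \<inter> Y. d x y \<ge> d x v \<and> d x y \<ge> d y v"
    and h5: "\<forall>x\<in>X - (X \<inter> Y). \<forall>y\<in>Y - (X \<inter> Y). d x y \<ge> ddiam d (X \<inter> Y)"
    and a0: "a0 \<in> X" "a0 \<in> Y"
    and W: "finite W" "a0 \<in> W"
    and \<sigma>: "\<sigma> \<in> VR d r Z" "\<sigma> \<subseteq> W" and \<alpha>: "\<alpha> \<in> simplex_pts \<sigma>"
  shows "retr X Y a0 W \<alpha> \<in> geom_real_set (VR d r X \<union> VR d r Y)"
    and "supp (retr X Y a0 W \<alpha>) \<subseteq> W"
    and "0 \<le> t \<Longrightarrow> t \<le> 1 \<Longrightarrow> HH X Y a0 W t \<alpha> \<in> geom_real_set (VR d r Z)"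
    and "0 \<le> t \<Longrightarrow> t \<le> 1 \<Longrightarrow> supp (HH X Y a0 W t \<alpha>) \<subseteq> W"
proof -
  have fs: "finite \<sigma>" using \<sigma> VR_finite by blast
  have sZ: "\<sigma> \<subseteq> Z" using \<sigma> unfolding VR_def by blast
  have "(\<exists>x. x \<in> \<sigma> \<and> x \<in> X - Y) \<and> (\<exists>y. y \<in> \<sigma> \<and> y \<in> Y - X) \<or> \<sigma> \<subseteq> X \<or> \<sigma> \<subseteq> Y"
    using sZ XYZ by blast
  then have "(retr X Y a0 W \<alpha> \<in> geom_real_set (VR d r X \<union> VR d r Y) \<and> supp (retr X Y a0 W \<alpha>) \<subseteq> W) \<and>
     (0 \<le> t \<longrightarrow> t \<le> 1 \<longrightarrow> HH X Y a0 W t \<alpha> \<in> geom_real_set (VR d r Z) \<and> supp (HH X Y a0 W t \<alpha>) \<subseteq> W)"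
  proof
    assume "(\<exists>x. x \<in> \<sigma> \<and> x \<in> X - Y) \<and> (\<exists>y. y \<in> \<sigma> \<and> y \<in> Y - X)"
    then obtain x y where xy: "x \<in> \<sigma>" "x \<in> X - Y" "y \<in> \<sigma>" "y \<in> Y - X" by blast
    let ?S = "insert a0 \<sigma>"
    have SK: "?S \<in> VR d r Z" using bad_insert[OF dist XYZ h4 h5 a0 \<sigma>(1) xy] .
    have fS: "finite ?S" using fs by simp
    have SW: "?S \<subseteq> W" using W \<sigma> by blast
    have rS: "retr X Y a0 W \<alpha> \<in> simplex_pts ?S"
      using retr_simplex[OF \<alpha> \<sigma>(2) W(1) fs a0] .
    have r1: "retr X Y a0 W \<alpha> \<in> geom_real_set (VR d r X \<union> VR d r Y)"
    proof -
      have "(\<forall>v\<in>X - Y. retr X Y a0 W \<alpha> v = 0) \<or> (\<forall>v\<in>Y - X. retr X Y a0 W \<alpha> v = 0)"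
        using retr_side[OF \<alpha> \<sigma>(2) W(1) a0] .
      then show ?thesis
      proof
        assume "\<forall>v\<in>X - Y. retr X Y a0 W \<alpha> v = 0"
        then have "retr X Y a0 W \<alpha> \<in> geom_real_set (VR d r Y)"
          using to_VR[OF rS SK] XYZ by blast
        then show ?thesis using geom_real_set_mono[of "VR d r Y" "VR d r X \<union> VR d r Y"] by blast
      next
        assume "\<forall>v\<in>Y - X. retr X Y a0 W \<alpha> v = 0"
        then have "retr X Y a0 W \<alpha> \<in> geom_real_set (VR d r X)"
          using to_VR[OF rS SK, of Y X] XYZ by (simp add: Un_commute)
        then show ?thesis using geom_real_set_mono[of "VR d r X" "VR d r X \<union> VR d r Y"] by blast
      qed
    qed
    have r2: "supp (retr X Y a0 W \<alpha>) \<subseteq> W" using pt_supp(1)[OF rS fS] SW by blast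
    have h: "HH X Y a0 W t \<alpha> \<in> simplex_pts ?S" if "0 \<le> t" "t \<le> 1"
      unfolding HH_def using simplex_convex[OF simplex_mono[OF \<alpha> _ fS] rS that] by blast
    have h1: "HH X Y a0 W t \<alpha> \<in> geom_real_set (VR d r Z)" if "0 \<le> t" "t \<le> 1"
      using h[OF that] SK unfolding geom_real_set_def by blast
    have h2: "supp (HH X Y a0 W t \<alpha>) \<subseteq> W" if "0 \<le> t" "t \<le> 1"
      using pt_supp(1)[OF h[OF that] fS] SW by blast
    show ?thesis using r1 r2 h1 h2 by blast
  next
    assume s: "\<sigma> \<subseteq> X \<or> \<sigma> \<subseteq> Y"
    then have "\<sigma> \<in> VR d r X \<union> VR d r Y" using \<sigma>(1) unfolding VR_def by auto
    then have ag: "\<alpha> \<in> geom_real_set (VR d r X \<union> VR d r Y)" using \<alpha> unfolding geom_real_set_def by blast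
    have az: "\<alpha> \<in> geom_real_set (VR d r Z)" using \<alpha> \<sigma>(1) unfolding geom_real_set_def by blast
    have sa: "supp \<alpha> \<subseteq> W" using pt_supp(1)[OF \<alpha> fs] \<sigma>(2) by blast
    show ?thesis using retr_fix[OF ag] ag az sa by simp
  qed
  then show "retr X Y a0 W \<alpha> \<in> geom_real_set (VR d r X \<union> VR d r Y)"
    and "supp (retr X Y a0 W \<alpha>) \<subseteq> W"
    and "0 \<le> t \<Longrightarrow> t \<le> 1 \<Longrightarrow> HH X Y a0 W t \<alpha> \<in> geom_real_set (VR d r Z)"
    and "0 \<le> t \<Longrightarrow> t \<le> 1 \<Longrightarrow> supp (HH X Y a0 W t \<alpha>) \<subseteq> W"
    by blast+
qed


lemma cont_retr:
  assumes g: "continuous_map T (powertop_real UNIV) g" and W: "finite W"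
    and sp: "\<And>p. p \<in> topspace T \<Longrightarrow> \<exists>\<sigma>. \<sigma> \<subseteq> W \<and> g p \<in> simplex_pts \<sigma>"
  shows "continuous_map T (powertop_real UNIV) (\<lambda>p. retr X Y a0 W (g p))"
proof -
  have gv: "continuous_map T euclideanreal (\<lambda>p. g p v)" for v
    using g unfolding continuous_map_componentwise_UNIV by blast
  have ss: "continuous_map T euclideanreal (\<lambda>p. ssum P W (g p))" for P
    unfolding ssum_def using gv W by (intro continuous_map_sum) auto
  have m: "continuous_map T euclideanreal (\<lambda>p. mm X Y W (g p))"
    unfolding mm_def using ss by (intro continuous_map_real_min)
  have ph: "continuous_map T euclideanreal
      (\<lambda>p. if v \<in> P then phi (g p v) (ssum P W (g p)) (mm X Y W (g p)) else 0)"
    if P: "P = X - Y \<or> P = Y - X" for v P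
  proof (cases "v \<in> P")
    case True
    have "continuous_map T euclideanreal (\<lambda>p. phi (g p v) (ssum P W (g p)) (mm X Y W (g p)))"
    proof (rule phi_cont[OF gv ss m])
      fix p assume p: "p \<in> topspace T"
      then obtain \<sigma> where s: "\<sigma> \<subseteq> W" "g p \<in> simplex_pts \<sigma>" using sp by blast
      have "0 \<le> g p v" using simplex_nonneg[OF s(2)] .
      moreover have "g p v \<le> ssum P W (g p)" using le_ssum[OF s(2) s(1) W True] .
      moreover have "0 \<le> mm X Y W (g p)" "mm X Y W (g p) \<le> ssum P W (g p)"
        using mm_bounds[OF s(2), of X Y W] P by auto
      ultimately show "0 \<le> g p v \<and> g p v \<le> ssum P W (g p) \<and> 0 \<le> mm X Y W (g p) \<and> mm X Y W (g p) \<le> ssum P W (g p)"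
        by blast
    qed
    then show ?thesis using True by simp
  next
    case False
    then show ?thesis by simp
  qed
  have a: "continuous_map T euclideanreal (\<lambda>p. if v = a0 then 2 * mm X Y W (g p) else 0)" for v
    using m by (cases "v = a0") (auto intro: continuous_map_real_mult_left)
  show ?thesis
    unfolding continuous_map_componentwise_UNIV retr_def
  proof
    fix v
    show "continuous_map T euclideanreal (\<lambda>p. g p v
      - (if v \<in> X - Y then phi (g p v) (ssum (X - Y) W (g p)) (mm X Y W (g p)) else 0)
      - (if v \<in> Y - X then phi (g p v) (ssum (Y - X) W (g p)) (mm X Y W (g p)) else 0)
      + (if v = a0 then 2 * mm X Y W (g p) else 0))"
      using gv[of v] ph[of "X - Y" v] ph[of "Y - X" v] a[of v]
      by (intro continuous_map_add continuous_map_diff) auto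
  qed
qed

lemma cont_HH:
  assumes g: "continuous_map T (powertop_real UNIV) g" and W: "finite W"
    and sp: "\<And>p. p \<in> topspace T \<Longrightarrow> \<exists>\<sigma>. \<sigma> \<subseteq> W \<and> g p \<in> simplex_pts \<sigma>"
  shows "continuous_map (prod_topology (top_of_set {0..1}) T) (powertop_real UNIV)
           (\<lambda>z. HH X Y a0 W (fst z) (g (snd z)))"
proof -
  let ?P = "prod_topology (top_of_set {0..1::real}) T"
  have "continuous_map ?P (top_of_set {0..1}) fst" by (rule continuous_map_fst)
  then have fc: "continuous_map ?P euclideanreal fst"
    by (simp add: continuous_map_in_subtopology)
  have sc: "continuous_map ?P T snd" by (rule continuous_map_snd)
  have r: "continuous_map T (powertop_real UNIV) (\<lambda>p. retr X Y a0 W (g p))"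
    by (rule cont_retr[OF g W sp])
  have rv: "continuous_map ?P euclideanreal (\<lambda>z. retr X Y a0 W (g (snd z)) v)" for v
    using continuous_map_compose[OF sc r[unfolded continuous_map_componentwise_UNIV, rule_format, of v]]
    by (simp add: o_def)
  have gv: "continuous_map ?P euclideanreal (\<lambda>z. g (snd z) v)" for v
    using continuous_map_compose[OF sc g[unfolded continuous_map_componentwise_UNIV, rule_format, of v]]
    by (simp add: o_def)
  show ?thesis
    unfolding continuous_map_componentwise_UNIV HH_def
  proof
    fix v
    show "continuous_map ?P euclideanreal
       (\<lambda>z. (1 - fst z) * g (snd z) v + fst z * retr X Y a0 W (g (snd z)) v)"
      using fc gv[of v] rv[of v] by (intro continuous_intros) auto
  qed
qed

lemma cont_into_geom:
  assumes f: "continuous_map T (powertop_real UNIV) f" and W: "finite W"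
    and fin: "\<forall>\<sigma>\<in>K. finite \<sigma>"
    and down: "\<And>\<sigma> \<tau>. \<sigma> \<in> K \<Longrightarrow> \<tau> \<subseteq> \<sigma> \<Longrightarrow> \<tau> \<noteq> {} \<Longrightarrow> \<tau> \<in> K"
    and img: "\<And>p. p \<in> topspace T \<Longrightarrow> f p \<in> geom_real_set K \<and> supp (f p) \<subseteq> W"
  shows "continuous_map T (geom_real K) f"
proof (rule cont_prod_to_geom[OF f _ _ fin])
  let ?F = "{\<tau> \<in> K. \<tau> \<subseteq> W}"
  have "?F \<subseteq> Pow W" by blast
  then show "finite ?F" using W finite_subset by blast
  show "?F \<subseteq> K" by blast
  fix p assume p: "p \<in> topspace T"
  then obtain \<sigma> where s: "\<sigma> \<in> K" "f p \<in> simplex_pts \<sigma>"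
    using img unfolding geom_real_set_def by blast
  note ps = pt_supp[OF s(2) fin[rule_format, OF s(1)]]
  have "supp (f p) \<in> ?F" using down[OF s(1) ps(1) ps(2)] img[OF p] by blast
  then show "f p \<in> (\<Union>\<sigma>\<in>?F. simplex_pts \<sigma>)" using ps(3) by blast
qed

lemma get_W:
  assumes g: "continuous_map T (geom_real (VR d r Z)) g" and T: "compact_space T"
  shows "\<exists>W. finite W \<and> a0 \<in> W \<and> (\<forall>p\<in>topspace T. \<exists>\<sigma>\<in>VR d r Z. \<sigma> \<subseteq> W \<and> g p \<in> simplex_pts \<sigma>)"
proof -
  let ?S = "g ` topspace T"
  have "compactin (geom_real (VR d r Z)) ?S"
    using image_compactin[OF T[unfolded compact_space_def] g] .
  then have fs: "finite (supp ` ?S)"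
    using compact_finite_supp VR_finite by blast
  have pt: "supp (g p) \<in> VR d r Z \<and> g p \<in> simplex_pts (supp (g p))" if p: "p \<in> topspace T" for p
  proof -
    have "g p \<in> geom_real_set (VR d r Z)"
      using g p unfolding continuous_map_def topspace_geom_real by blast
    then obtain \<sigma> where s: "\<sigma> \<in> VR d r Z" "g p \<in> simplex_pts \<sigma>"
      unfolding geom_real_set_def by blast
    note ps = pt_supp[OF s(2) VR_finite[OF s(1)]]
    show ?thesis using VR_down[OF s(1) ps(1) ps(2)] ps(3) by blast
  qed
  define W where "W = insert a0 (\<Union>(supp ` ?S))"
  have "finite (supp (g p))" if "p \<in> topspace T" for p
    using pt[OF that] VR_finite by blast
  then have "finite W" unfolding W_def using fs
    by (auto simp: image_image)
  moreover have "\<forall>p\<in>topspace T. \<exists>\<sigma>\<in>VR d r Z. \<sigma> \<subseteq> W \<and> g p \<in> simplex_pts \<sigma>"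
    using pt unfolding W_def by blast
  ultimately show ?thesis unfolding W_def by blast
qed


lemma HOM:
  assumes dist: "distance_on Z d" and XYZ: "X \<union> Y = Z"
    and h4: "\<forall>x\<in>X - (X \<inter> Y). \<forall>y\<in>Y - (X \<inter> Y). \<forall>v\<in>X \<inter> Y. d x y \<ge> d x v \<and> d x y \<ge> d y v"
    and h5: "\<forall>x\<in>X - (X \<inter> Y). \<forall>y\<in>Y - (X \<inter> Y). d x y \<ge> ddiam d (X \<inter> Y)"
    and a0: "a0 \<in> X" "a0 \<in> Y"
    and g: "continuous_map T (geom_real (VR d r Z)) g" and T: "compact_space T"
  shows "\<exists>W. continuous_map (prod_topology (top_of_set {0..1}) T) (geom_real (VR d r Z))
               (\<lambda>z. HH X Y a0 W (fst z) (g (snd z))) \<and>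
             continuous_map T (geom_real (VR d r X \<union> VR d r Y)) (\<lambda>p. retr X Y a0 W (g p))"
proof -
  obtain W where W: "finite W" "a0 \<in> W"
    and sp: "\<forall>p\<in>topspace T. \<exists>\<sigma>\<in>VR d r Z. \<sigma> \<subseteq> W \<and> g p \<in> simplex_pts \<sigma>"
    using get_W[OF g T, of a0] by blast
  have gp: "continuous_map T (powertop_real UNIV) g" by (rule cont_geom_to_prod[OF g])
  have sp': "\<exists>\<sigma>. \<sigma> \<subseteq> W \<and> g p \<in> simplex_pts \<sigma>" if "p \<in> topspace T" for p
    using sp that by blast
  have c1: "continuous_map T (geom_real (VR d r X \<union> VR d r Y)) (\<lambda>p. retr X Y a0 W (g p))"
  proof (rule cont_into_geom[OF cont_retr[OF gp W(1) sp'] W(1)])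
    show "\<forall>\<sigma>\<in>VR d r X \<union> VR d r Y. finite \<sigma>" using VRU_finite by blast
    show "\<And>\<sigma> \<tau>. \<sigma> \<in> VR d r X \<union> VR d r Y \<Longrightarrow> \<tau> \<subseteq> \<sigma> \<Longrightarrow> \<tau> \<noteq> {} \<Longrightarrow> \<tau> \<in> VR d r X \<union> VR d r Y"
      by (rule VRU_down)
    fix p assume "p \<in> topspace T"
    then obtain \<sigma> where s: "\<sigma> \<in> VR d r Z" "\<sigma> \<subseteq> W" "g p \<in> simplex_pts \<sigma>" using sp by blast
    show "retr X Y a0 W (g p) \<in> geom_real_set (VR d r X \<union> VR d r Y) \<and> supp (retr X Y a0 W (g p)) \<subseteq> W"
      using pointwise(1,2)[OF dist XYZ h4 h5 a0 W s] by blast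
  qed
  have c2: "continuous_map (prod_topology (top_of_set {0..1}) T) (geom_real (VR d r Z))
               (\<lambda>z. HH X Y a0 W (fst z) (g (snd z)))"
  proof (rule cont_into_geom[OF cont_HH[OF gp W(1) sp'] W(1)])
    show "\<forall>\<sigma>\<in>VR d r Z. finite \<sigma>" using VR_finite by blast
    show "\<And>\<sigma> \<tau>. \<sigma> \<in> VR d r Z \<Longrightarrow> \<tau> \<subseteq> \<sigma> \<Longrightarrow> \<tau> \<noteq> {} \<Longrightarrow> \<tau> \<in> VR d r Z"
      by (rule VR_down)
    fix z assume "z \<in> topspace (prod_topology (top_of_set {0..1::real}) T)"
    then have z: "fst z \<in> {0..1}" "snd z \<in> topspace T" by (auto simp: topspace_prod_topology)
    then obtain \<sigma> where s: "\<sigma> \<in> VR d r Z" "\<sigma> \<subseteq> W" "g (snd z) \<in> simplex_pts \<sigma>" using sp by blast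
    show "HH X Y a0 W (fst z) (g (snd z)) \<in> geom_real_set (VR d r Z) \<and> supp (HH X Y a0 W (fst z) (g (snd z))) \<subseteq> W"
      using pointwise(3,4)[OF dist XYZ h4 h5 a0 W s, of "fst z"] z(1) by auto
  qed
  show ?thesis using c1 c2 by blast
qed

lemma cube_compact: "compact_space (cube_top n)"
  unfolding cube_top_def cube_def
  by (intro compact_space_subtopology) (simp add: compactin_PiE)

lemma I01_compact: "compact_space (top_of_set {0..1::real})"
  by (intro compact_space_subtopology) simp

lemma prod_compact: "compact_space (prod_topology (top_of_set {0..1::real}) (cube_top n))"
  using cube_compact I01_compact compact_space_prod_topology by blast

lemma cube_bd_top: "cube_bd n \<subseteq> topspace (cube_top n)"
  unfolding cube_top_def cube_bd_def cube_def by auto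


theorem proposition10p7:
  fixes d :: "'a \<Rightarrow> 'a \<Rightarrow> ennreal" and Z X Y :: "'a set"
  assumes "distance_on Z d"
    and "X \<union> Y = Z"
    and "X \<inter> Y \<noteq> {}"
    and "\<forall>x\<in>X - (X \<inter> Y). \<forall>y\<in>Y - (X \<inter> Y). \<forall>v\<in>X \<inter> Y. d x y \<ge> d x v \<and> d x y \<ge> d y v"
    and "\<forall>x\<in>X - (X \<inter> Y). \<forall>y\<in>Y - (X \<inter> Y). d x y \<ge> ddiam d (X \<inter> Y)"
  shows "\<forall>r::real. 0 \<le> r \<longrightarrow>
           weak_equivalence (geom_real (VR d r X \<union> VR d r Y)) (geom_real (VR d r Z)) id"
proof (intro allI impI)
  fix r :: real assume "0 \<le> r"
  obtain a0 where a0: "a0 \<in> X" "a0 \<in> Y" using assms(3) by blast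
  let ?KL = "VR d r X \<union> VR d r Y"
  let ?KZ = "VR d r Z"
  let ?TL = "geom_real ?KL"
  let ?TZ = "geom_real ?KZ"
  note hom = HOM[OF assms(1,2,4,5) a0]
  have KLZ: "?KL \<subseteq> ?KZ" using VR_mono[of X Z d r] VR_mono[of Y Z d r] assms(2) by blast
  have cid: "continuous_map ?TL ?TZ id"
    unfolding continuous_map
  proof (intro conjI allI impI)
    show "id ` topspace ?TL \<subseteq> topspace ?TZ"
      using geom_real_set_mono[OF KLZ] by (simp add: topspace_geom_real)
    fix U assume "openin ?TZ U"
    then have U: "geom_real_open ?KZ U" by (simp add: openin_geom_real)
    have "geom_real_open ?KL (U \<inter> geom_real_set ?KL)"
      unfolding geom_real_open_def
    proof (intro conjI ballI)
      fix \<sigma> assume s: "\<sigma> \<in> ?KL"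
      then have "U \<inter> geom_real_set ?KL \<inter> simplex_pts \<sigma> = U \<inter> simplex_pts \<sigma>"
        using simplex_sub[OF s] by blast
      moreover have "\<sigma> \<in> ?KZ" using s KLZ by blast
      ultimately show "openin (subtopology (powertop_real UNIV) (simplex_pts \<sigma>)) (U \<inter> geom_real_set ?KL \<inter> simplex_pts \<sigma>)"
        using U unfolding geom_real_open_def by simp
    qed blast
    moreover have "{x \<in> topspace ?TL. id x \<in> U} = U \<inter> geom_real_set ?KL"
      by (auto simp: topspace_geom_real)
    ultimately show "openin ?TL {x \<in> topspace ?TL. id x \<in> U}"
      by (simp add: openin_geom_real)
  qed
  have pc: "\<exists>x\<in>topspace ?TL. path_component_of ?TZ (id x) y" if y: "y \<in> topspace ?TZ" for y
  proof -
    have "continuous_map (top_of_set {0..1::real}) ?TZ (\<lambda>_. y)" using y by simp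
    then obtain W where c1: "continuous_map (prod_topology (top_of_set {0..1}) (top_of_set {0..1::real})) ?TZ
               (\<lambda>z. HH X Y a0 W (fst z) y)"
      and c2: "continuous_map (top_of_set {0..1::real}) ?TL (\<lambda>p. retr X Y a0 W y)"
      using hom[OF _ I01_compact] by blast
    have x: "retr X Y a0 W y \<in> topspace ?TL"
    proof -
      have "(\<lambda>p. retr X Y a0 W y) ` topspace (top_of_set {0..1::real}) \<subseteq> topspace ?TL"
        by (rule continuous_map_image_subset_topspace[OF c2])
      moreover have "(0::real) \<in> topspace (top_of_set {0..1::real})" by simp
      ultimately show ?thesis by blast
    qed
    have pair: "continuous_map (top_of_set {0..1::real}) (prod_topology (top_of_set {0..1}) (top_of_set {0..1::real})) (\<lambda>t. (t, t))"
      by (rule continuous_map_pairedI[OF continuous_map_id continuous_map_id, unfolded id_def])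
    have "pathin ?TZ (\<lambda>t. HH X Y a0 W t y)"
      unfolding pathin_def using continuous_map_compose[OF pair c1] by (simp add: o_def)
    then have "path_component_of ?TZ y (retr X Y a0 W y)"
      unfolding path_component_of_def by (intro exI[of _ "\<lambda>t. HH X Y a0 W t y"]) (simp add: HH_0 HH_1)
    then show ?thesis using x path_component_of_sym by fastforce
  qed
  have surj: "\<exists>h\<in>sph_maps ?TL n x. homotopic_rel_bd ?TZ n (id x) (id \<circ> h) g"
    if x: "x \<in> topspace ?TL" and g: "g \<in> sph_maps ?TZ n (id x)" for n x g
  proof -
    have gc: "continuous_map (cube_top n) ?TZ g" and gb: "\<forall>t\<in>cube_bd n. g t = x"
      using g unfolding sph_maps_def by auto
    obtain W where c1: "continuous_map (prod_topology (top_of_set {0..1}) (cube_top n)) ?TZ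
               (\<lambda>z. HH X Y a0 W (fst z) (g (snd z)))"
      and c2: "continuous_map (cube_top n) ?TL (\<lambda>p. retr X Y a0 W (g p))"
      using hom[OF gc cube_compact] by blast
    have xg: "x \<in> geom_real_set ?KL" using x by (simp add: topspace_geom_real)
    have "(\<lambda>p. retr X Y a0 W (g p)) \<in> sph_maps ?TL n x"
      unfolding sph_maps_def using c2 gb retr_fix(1)[OF xg] by auto
    moreover have "homotopic_rel_bd ?TZ n (id x) (id \<circ> (\<lambda>p. retr X Y a0 W (g p))) g"
      unfolding homotopic_rel_bd_def
    proof (rule homotopic_with_symD)
      show "homotopic_with (\<lambda>h. \<forall>t\<in>cube_bd n. h t = id x) (cube_top n) ?TZ g (id \<circ> (\<lambda>p. retr X Y a0 W (g p)))"
        unfolding homotopic_with_def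
        using c1 gb retr_fix(2)[OF xg] by (intro exI[of _ "\<lambda>z. HH X Y a0 W (fst z) (g (snd z))"]) (auto simp: HH_0 HH_1)
    qed
    ultimately show ?thesis by blast
  qed
  have inj: "homotopic_rel_bd ?TL n x h1 h2"
    if x: "x \<in> topspace ?TL" and h1: "h1 \<in> sph_maps ?TL n x" and h2: "h2 \<in> sph_maps ?TL n x"
      and hz: "homotopic_rel_bd ?TZ n (id x) (id \<circ> h1) (id \<circ> h2)" for n x h1 h2
  proof -
    have "\<exists>G. continuous_map (prod_topology (top_of_set {0..1::real}) (cube_top n)) ?TZ G \<and>
      (\<forall>q. G (0, q) = h1 q) \<and> (\<forall>q. G (1, q) = h2 q) \<and> (\<forall>t\<in>{0..1}. \<forall>q\<in>cube_bd n. G (t, q) = x)"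
      using hz unfolding homotopic_rel_bd_def homotopic_with_def by (simp add: o_def)
    then obtain G where Gc: "continuous_map (prod_topology (top_of_set {0..1::real}) (cube_top n)) ?TZ G"
      and G0: "\<forall>q. G (0, q) = h1 q" and G1: "\<forall>q. G (1, q) = h2 q"
      and GP: "\<forall>t\<in>{0..1}. \<forall>q\<in>cube_bd n. G (t, q) = x"
      by (elim exE conjE) (rule that)
    obtain W where c2: "continuous_map (prod_topology (top_of_set {0..1}) (cube_top n)) ?TL (\<lambda>p. retr X Y a0 W (G p))"
      using hom[OF Gc prod_compact] by blast
    have xg: "x \<in> geom_real_set ?KL" using x by (simp add: topspace_geom_real)
    have h1c: "continuous_map (cube_top n) ?TL h1" and h2c: "continuous_map (cube_top n) ?TL h2"
      using h1 h2 unfolding sph_maps_def by auto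
    have h1t: "h1 q \<in> geom_real_set ?KL" if "q \<in> topspace (cube_top n)" for q
      using h1c that unfolding continuous_map_def topspace_geom_real by blast
    have h2t: "h2 q \<in> geom_real_set ?KL" if "q \<in> topspace (cube_top n)" for q
      using h2c that unfolding continuous_map_def topspace_geom_real by blast
    have Pr: "\<And>h k. (\<And>q. q \<in> topspace (cube_top n) \<Longrightarrow> h q = k q) \<Longrightarrow>
        ((\<forall>t\<in>cube_bd n. h t = x) \<longleftrightarrow> (\<forall>t\<in>cube_bd n. k t = x))"
      using cube_bd_top[of n] by (metis subsetD)
    have "\<exists>H. continuous_map (prod_topology (top_of_set {0..1::real}) (cube_top n)) ?TL H \<and>
              (\<forall>q\<in>topspace (cube_top n). H (0, q) = h1 q) \<and>
              (\<forall>q\<in>topspace (cube_top n). H (1, q) = h2 q) \<and>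
              (\<forall>t\<in>{0..1}. \<forall>q\<in>cube_bd n. H (t, q) = x)"
    proof (intro exI[of _ "\<lambda>p. retr X Y a0 W (G p)"] conjI ballI)
      show "continuous_map (prod_topology (top_of_set {0..1}) (cube_top n)) ?TL (\<lambda>p. retr X Y a0 W (G p))"
        by (rule c2)
    next
      fix q assume q: "q \<in> topspace (cube_top n)"
      show "retr X Y a0 W (G (0, q)) = h1 q" using G0 retr_fix(1)[OF h1t[OF q]] by simp
    next
      fix q assume q: "q \<in> topspace (cube_top n)"
      show "retr X Y a0 W (G (1, q)) = h2 q" using G1 retr_fix(1)[OF h2t[OF q]] by simp
    next
      fix t :: real and q assume t: "t \<in> {0..1}" and q: "q \<in> cube_bd n"
      show "retr X Y a0 W (G (t, q)) = x"
        using GP t q retr_fix(1)[OF xg] by simp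
    qed
    then show ?thesis
      unfolding homotopic_rel_bd_def
      using homotopic_with[where P="\<lambda>h. \<forall>t\<in>cube_bd n. h t = x" and X="cube_top n" and Y="?TL" and p=h1 and q=h2] Pr
      by blast
  qed
  show "weak_equivalence ?TL ?TZ id"
    unfolding weak_equivalence_def
    using cid pc surj inj by blast
qed

end
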